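(* Let $q>0$, $q\neq1$, $\nu,t\in\mathbb{R}$. For every integer $N\ge0$, $$H_N(x,\nu t;q)=e^{\nu tD_x^2}x^N,$$ where $e^{aD_x^2}:=\sum_{n\ge0}\frac{a^n}{n!}D_x^{2n}$ (a finite sum on polynomials). In particular $\phi(x,t)=e^{\nu tD_x^2}x^N$ solves $\partial_t\phi-\nu D_x^2\phi=0$ with $\phi(x,0)=x^N$.
   Context: For $n\ge 0$ let $[n]_q=\frac{q^n-1}{q-1}$, $[0]_q!=1$, $[n]_q!=[1]_q\cdots[n]_q$, and $e_q(z)=\sum_{n\ge0}z^n/[n]_q!$. The $q$-derivative acts by $D_x x^n=[n]_qx^{n-1}$ (equivalently $D_xf(x)=\frac{f(qx)-f(x)}{(q-1)x}$). The $q$-Hermite polynomials $H_N(y;q)$ are defined by $e^{-s^2}e_q([2]_q s y)=\sum_{N\ge0}H_N(y;q)\,s^N/[N]_q!$ (formal power series in $s$), and the $q$-Kampe-de Feriet polynomials by $H_N(x,\nu t;q)=(-\nu t)^{N/2}H_N\big(\tfrac{x}{[2]_q\sqrt{-\nu t}};q\big)$, understood as the resulting polynomial in $x$ and $\nu t$. *)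

theory Defs
  imports Complex_Main "HOL-Computational_Algebra.Polynomial" "HOL-Computational_Algebra.Formal_Power_Series"
begin

definition qnum :: "real \<Rightarrow> nat \<Rightarrow> real" where
  "qnum q n = (q ^ n - 1) / (q - 1)"

definition qfact :: "real \<Rightarrow> nat \<Rightarrow> real" where
  "qfact q n = (\<Prod>k\<in>{1..n}. qnum q k)"

definition qexp_fps :: "real \<Rightarrow> complex \<Rightarrow> complex fps" where
  "qexp_fps q z = Abs_fps (\<lambda>n. z ^ n / complex_of_real (qfact q n))"

(* q-Hermite polynomials: e^{-s^2} e_q([2]_q s y) = sum_N H_N(y;q) s^N / [N]_q! *)
definition qHermite :: "nat \<Rightarrow> complex \<Rightarrow> real \<Rightarrow> complex" where
  "qHermite N y q = complex_of_real (qfact q N) *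
     fps_nth ((fps_exp (-1) oo (fps_X ^ 2)) * qexp_fps q (complex_of_real (qnum q 2) * y)) N"

definition qKdF_raw :: "nat \<Rightarrow> real \<Rightarrow> real \<Rightarrow> real \<Rightarrow> complex" where
  "qKdF_raw N x a q = csqrt (complex_of_real (- a)) ^ N *
     qHermite N (complex_of_real x / (complex_of_real (qnum q 2) * csqrt (complex_of_real (- a)))) q"

(* q-Kampe-de Feriet polynomial H_N(x, a; q) (a = nu t), understood as the polynomial in a,
   i.e. at a = 0 its value is the continuous extension (limit). *)
definition qKdF :: "nat \<Rightarrow> real \<Rightarrow> real \<Rightarrow> real \<Rightarrow> complex" where
  "qKdF N x a q = (if a \<noteq> 0 then qKdF_raw N x a q
                   else Lim (at (0::real)) (\<lambda>b. qKdF_raw N x b q))"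

definition qD :: "real \<Rightarrow> real poly \<Rightarrow> real poly" where
  "qD q p = (\<Sum>n\<le>degree p. monom (qnum q n * coeff p n) (n - 1))"

(* e^{a D^2} p = sum_n a^n/n! D^{2n} p  (finite on polynomials: terms with n > degree p vanish) *)
definition qexpD2 :: "real \<Rightarrow> real \<Rightarrow> real poly \<Rightarrow> real poly" where
  "qexpD2 a q p = (\<Sum>n\<le>degree p. smult (a ^ n / fact n) ((qD q ^^ (2 * n)) p))"

end

theory Submission
  imports Defs
begin

lemma coeff_qD: "coeff (qD q p) k = qnum q (Suc k) * coeff p (Suc k)"
proof -
  have "coeff (qD q p) k = (\<Sum>n\<le>degree p. if n - 1 = k then qnum q n * coeff p n else 0)"
    by (simp add: qD_def coeff_sum coeff_monom)
  also have "\<dots> = (\<Sum>n\<le>degree p. if n = Suc k then qnum q n * coeff p n else 0)"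
    by (rule sum.cong) (auto simp: qnum_def split: nat_diff_split)
  also have "\<dots> = qnum q (Suc k) * coeff p (Suc k)"
    by (auto simp: coeff_eq_0)
  finally show ?thesis .
qed

lemma qD_add: "qD q (p + r) = qD q p + qD q r"
  by (simp add: poly_eq_iff coeff_qD algebra_simps)
lemma qD_smult: "qD q (smult c p) = smult c (qD q p)"
  by (simp add: poly_eq_iff coeff_qD algebra_simps)
lemma qD_sum: "qD q (\<Sum>i\<in>A. f i) = (\<Sum>i\<in>A. qD q (f i))"
  by (induction A rule: infinite_finite_induct) (auto simp: qD_add poly_eq_iff coeff_qD coeff_sum)
lemma qD_monom: "qD q (monom c m) = monom (qnum q m * c) (m - 1)"
  by (cases m) (auto simp: poly_eq_iff coeff_qD coeff_monom qnum_def)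
lemma qD_pow_monom: "(qD q ^^ j) (monom c m) = monom (c * (\<Prod>i<j. qnum q (m - i))) (m - j)"
  by (induction j) (auto simp: qD_monom algebra_simps diff_Suc)

definition PP :: "real \<Rightarrow> nat \<Rightarrow> nat \<Rightarrow> real" where
  "PP q N n = (\<Prod>i<2*n. qnum q (N - i))"

lemma PP_Suc: "PP q N (Suc n) = PP q N n * qnum q (N - 2*n) * qnum q (N - 2*n - 1)"
  by (simp add: PP_def algebra_simps)

lemma PP_zero: "N < 2*n \<Longrightarrow> PP q N n = 0"
  unfolding PP_def by (rule prod_zero) (auto intro!: bexI[of _ N] simp: qnum_def)

lemma qfact_Suc: "qfact q (Suc n) = qfact q n * qnum q (Suc n)"
  by (simp add: qfact_def prod.cl_ivl_Suc)

lemma qfact_add: "qfact q (m + j) = qfact q m * (\<Prod>i<j. qnum q (m + j - i))"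
proof (induction j)
  case 0 then show ?case by simp
next
  case (Suc j)
  have "(\<Prod>i<Suc j. qnum q (m + Suc j - i)) = qnum q (m + Suc j) * (\<Prod>i<j. qnum q (m + j - i))"
    by (subst prod.lessThan_Suc_shift) simp
  then show ?case using Suc by (simp add: qfact_Suc)
qed

lemma qfact_PP: "2*n \<le> N \<Longrightarrow> qfact q N = qfact q (N - 2*n) * PP q N n"
  using qfact_add[of q "N - 2*n" "2*n"] by (simp add: PP_def)

lemma qnum_nz: "q > 0 \<Longrightarrow> q \<noteq> 1 \<Longrightarrow> k > 0 \<Longrightarrow> qnum q k \<noteq> 0"
proof
  assume "q > 0" "q \<noteq> 1" "k > 0" "qnum q k = 0"
  then have "q ^ k = 1 ^ k" by (simp add: qnum_def)
  then have "q = 1" using \<open>q > 0\<close> \<open>k > 0\<close> using power_eq_iff_eq_base[of k q 1] by simp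
  then show False using \<open>q \<noteq> 1\<close> by simp
qed

lemma qexpD2_monom: "qexpD2 a q (monom 1 N) = (\<Sum>n\<le>N. monom (a^n / fact n * PP q N n) (N - 2*n))"
  by (simp add: qexpD2_def degree_monom_eq qD_pow_monom PP_def smult_monom)

lemma poly_qexpD2: "poly (qexpD2 a q (monom 1 N)) x = (\<Sum>n\<le>N. a^n / fact n * PP q N n * x^(N - 2*n))"
  by (simp add: qexpD2_monom poly_sum poly_monom)

lemma DD_qexpD2: "qD q (qD q (qexpD2 a q (monom 1 N))) = (\<Sum>n\<le>N. monom (a^n / fact n * PP q N (Suc n)) (N - 2*Suc n))"
  by (simp add: qexpD2_monom qD_sum qD_monom PP_Suc algebra_simps diff_Suc split: nat.split)

lemma deriv_part:
  "((\<lambda>s. \<Sum>n\<le>N. (\<nu>*s)^n / fact n * PP q N n * x^(N - 2*n)) has_real_derivative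
     \<nu> * (\<Sum>n\<le>N. (\<nu>*s)^n / fact n * PP q N (Suc n) * x^(N - 2*Suc n))) (at s)"
proof -
  have D: "((\<lambda>s. \<Sum>n\<le>N. (\<nu>*s)^n / fact n * PP q N n * x^(N - 2*n)) has_real_derivative
     (\<Sum>n\<le>N. (of_nat n * (\<nu>*s)^(n-1) * \<nu>) / fact n * PP q N n * x^(N - 2*n))) (at s)"
    by (auto intro!: derivative_eq_intros sum.cong simp: mult_ac)
  have E: "(\<Sum>n\<le>N. (of_nat n * (\<nu>*s)^(n-1) * \<nu>) / fact n * PP q N n * x^(N - 2*n))
     = \<nu> * (\<Sum>n\<le>N. (\<nu>*s)^n / fact n * PP q N (Suc n) * x^(N - 2*Suc n))"
  proof (cases N)
    case 0 then show ?thesis by (simp add: PP_Suc PP_def qnum_def)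
  next
    case (Suc M)
    have "(\<Sum>n\<le>N. (of_nat n * (\<nu>*s)^(n-1) * \<nu>) / fact n * PP q N n * x^(N - 2*n))
        = (\<Sum>n\<le>M. (of_nat (Suc n) * (\<nu>*s)^n * \<nu>) / fact (Suc n) * PP q N (Suc n) * x^(N - 2*Suc n))"
      unfolding Suc by (subst sum.atMost_Suc_shift) simp
    also have "\<dots> = (\<Sum>n\<le>M. \<nu> * ((\<nu>*s)^n / fact n * PP q N (Suc n) * x^(N - 2*Suc n)))"
      by (rule sum.cong) (simp_all add: field_simps del: of_nat_Suc)
    also have "\<dots> = \<nu> * (\<Sum>n\<le>N. (\<nu>*s)^n / fact n * PP q N (Suc n) * x^(N - 2*Suc n))"
      using PP_zero[of N "Suc (Suc M)" q] unfolding Suc by (simp add: sum_distrib_left)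
    finally show ?thesis .
  qed
  show ?thesis using D unfolding E .
qed

lemma E_nth: "fps_nth ((fps_exp (-1) oo (fps_X ^ 2)) :: complex fps) k
   = (\<Sum>i\<le>N. if k = 2*i then (-1)^i / of_nat (fact i) else 0)" if "k \<le> N"
proof -
  have "fps_nth ((fps_exp (-1) oo (fps_X ^ 2)) :: complex fps) k
     = (\<Sum>i=0..k. if k = 2*i then (-1)^i / of_nat (fact i) else 0)"
    by (simp add: fps_compose_nth power_mult[symmetric] fps_X_power_nth if_distrib cong: if_cong)
  also have "\<dots> = (\<Sum>i\<le>N. if k = 2*i then (-1)^i / of_nat (fact i) else 0)"
    using that by (intro sum.mono_neutral_left) auto
  finally show ?thesis .
qed

lemma qfact_nz: "q > 0 \<Longrightarrow> q \<noteq> 1 \<Longrightarrow> qfact q n \<noteq> 0"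
  unfolding qfact_def using qnum_nz[of q] by (auto simp: prod_zero_iff)

lemma raw_eq:
  assumes q: "q > 0" "q \<noteq> 1" and a: "a \<noteq> 0"
  shows "qKdF_raw N x a q = complex_of_real (\<Sum>n\<le>N. a^n / fact n * PP q N n * x^(N - 2*n))"
proof -
  define c where "c = csqrt (complex_of_real (- a))"
  have c2: "c^2 = complex_of_real (-a)" unfolding c_def by simp
  have cnz: "c \<noteq> 0" using a unfolding c_def by simp
  have q2: "qnum q 2 \<noteq> 0" using qnum_nz[OF q, of 2] by simp
  define y where "y = complex_of_real x / (complex_of_real (qnum q 2) * c)"
  define Q where "Q = qexp_fps q (complex_of_real (qnum q 2) * y)"
  define E where "E = ((fps_exp (-1) oo (fps_X ^ 2)) :: complex fps)"
  define A where "A = (\<lambda>i::nat. (-1)^i / of_nat (fact i) :: complex)"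
  have Qn: "fps_nth Q m = (complex_of_real x / c)^m / complex_of_real (qfact q m)" for m
    unfolding Q_def qexp_fps_def y_def using q2 by simp
  have "fps_nth (E * Q) N = (\<Sum>k=0..N. fps_nth E k * fps_nth Q (N - k))"
    by (simp add: fps_mult_nth)
  also have "\<dots> = (\<Sum>k=0..N. \<Sum>i\<le>N. if k = 2*i then A i * fps_nth Q (N - k) else 0)"
    by (rule sum.cong) (auto simp: E_def E_nth A_def sum_distrib_right intro!: sum.cong)
  also have "\<dots> = (\<Sum>i\<le>N. \<Sum>k=0..N. if k = 2*i then A i * fps_nth Q (N - k) else 0)"
    by (rule sum.swap)
  also have "\<dots> = (\<Sum>i\<le>N. if 2*i \<le> N then A i * fps_nth Q (N - 2*i) else 0)"
    by (rule sum.cong) (auto simp: sum.delta')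
  finally have EQ: "fps_nth (E * Q) N = \<dots>" .
  have trm: "c ^ N * (complex_of_real (qfact q N) * (if 2*i \<le> N then A i * fps_nth Q (N - 2*i) else 0))
     = complex_of_real (a^i / fact i * PP q N i * x^(N - 2*i))" if "i \<le> N" for i
  proof (cases "2*i \<le> N")
    case True
    have cN: "c ^ N = c ^ (N - 2*i) * (c^2)^i" using True
      by (metis le_add_diff_inverse2 power_add power_mult)
    have fq: "qfact q N = qfact q (N - 2*i) * PP q N i" using qfact_PP[OF True] .
    have nz: "qfact q (N - 2*i) \<noteq> 0" using qfact_nz[OF q] .
    have "c ^ N * (complex_of_real (qfact q N) * (A i * fps_nth Q (N - 2*i)))
       = (c^2)^i * A i * complex_of_real (PP q N i) * complex_of_real x ^ (N - 2*i)
         * (c ^ (N - 2*i) / c ^ (N - 2*i)) * (complex_of_real (qfact q (N - 2*i)) / complex_of_real (qfact q (N - 2*i)))"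
      unfolding cN fq Qn by (simp add: power_divide field_simps)
    also have "\<dots> = (c^2)^i * A i * complex_of_real (PP q N i) * complex_of_real x ^ (N - 2*i)"
      using cnz nz by simp
    also have "\<dots> = complex_of_real (a^i / fact i * PP q N i * x^(N - 2*i))"
      unfolding c2 A_def by (simp add: power_mult_distrib[symmetric] field_simps)
    finally show ?thesis using True by simp
  next
    case False
    then show ?thesis using PP_zero[of N i q] by simp
  qed
  have "qKdF_raw N x a q = c ^ N * (complex_of_real (qfact q N) * fps_nth (E * Q) N)"
    unfolding qKdF_raw_def qHermite_def c_def y_def Q_def E_def by simp
  also have "\<dots> = (\<Sum>i\<le>N. c ^ N * (complex_of_real (qfact q N) * (if 2*i \<le> N then A i * fps_nth Q (N - 2*i) else 0)))"
    unfolding EQ by (simp add: sum_distrib_left)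
  also have "\<dots> = (\<Sum>i\<le>N. complex_of_real (a^i / fact i * PP q N i * x^(N - 2*i)))"
    by (rule sum.cong) (simp_all add: trm)
  finally show ?thesis by simp
qed

theorem mainTheorem11:
  fixes q \<nu> t :: real and N :: nat
  assumes "q > 0" and "q \<noteq> 1"
  shows "(\<forall>x::real. qKdF N x (\<nu> * t) q
            = complex_of_real (poly (qexpD2 (\<nu> * t) q (monom 1 N)) x))
       \<and> (\<forall>(x::real) (s::real).
            ((\<lambda>s. poly (qexpD2 (\<nu> * s) q (monom 1 N)) x) has_real_derivative
               \<nu> * poly (qD q (qD q (qexpD2 (\<nu> * s) q (monom 1 N)))) x) (at s))
       \<and> (\<forall>x::real. poly (qexpD2 (\<nu> * 0) q (monom 1 N)) x = x ^ N)"
proof (intro conjI allI)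
  fix x :: real
  define G where "G = (\<lambda>a::real. \<Sum>n\<le>N. a^n / fact n * PP q N n * x^(N - 2*n))"
  have G0: "G 0 = x ^ N"
  proof -
    have "G 0 = (\<Sum>n\<le>N. if n = 0 then x ^ N else 0)"
      unfolding G_def by (rule sum.cong) (auto simp: PP_def)
    then show ?thesis by simp
  qed
  show "poly (qexpD2 (\<nu> * 0) q (monom 1 N)) x = x ^ N"
    using G0 by (simp add: poly_qexpD2 G_def)
  show "qKdF N x (\<nu> * t) q = complex_of_real (poly (qexpD2 (\<nu> * t) q (monom 1 N)) x)"
  proof (cases "\<nu> * t = 0")
    case False
    then show ?thesis using raw_eq[OF assms False] by (simp add: qKdF_def poly_qexpD2)
  next
    case True
    have cont: "((\<lambda>b. complex_of_real (G b)) \<longlongrightarrow> complex_of_real (G 0)) (at 0)"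
      unfolding G_def by (intro tendsto_intros) auto
    have ev: "\<forall>\<^sub>F b in at (0::real). complex_of_real (G b) = qKdF_raw N x b q"
      unfolding eventually_at_filter using raw_eq[OF assms] by (auto simp: G_def)
    have "((\<lambda>b. qKdF_raw N x b q) \<longlongrightarrow> complex_of_real (G 0)) (at 0)"
      using tendsto_cong[OF ev] cont by simp
    then have "Lim (at (0::real)) (\<lambda>b. qKdF_raw N x b q) = complex_of_real (G 0)"
      by (intro tendsto_Lim) simp_all
    moreover have "poly (qexpD2 (\<nu> * t) q (monom 1 N)) x = G (\<nu> * t)"
      by (simp add: poly_qexpD2 G_def)
    ultimately show ?thesis unfolding qKdF_def using True by (simp only: if_False not_True_eq_False) simp
  qed
next
  fix x s :: real
  show "((\<lambda>s. poly (qexpD2 (\<nu> * s) q (monom 1 N)) x) has_real_derivative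
               \<nu> * poly (qD q (qD q (qexpD2 (\<nu> * s) q (monom 1 N)))) x) (at s)"
    using deriv_part[where \<nu>=\<nu> and N=N and q=q and x=x and s=s] by (simp add: poly_qexpD2 DD_qexpD2 poly_sum poly_monom)
qed

end
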